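(* Let $k,l$ be positive integers and let $f(s,u)=\sum_{m=k}^\infty\sum_{n=l}^\infty a_{m,n}m^{-s}n^{-u}$ be a double Dirichlet series that is absolutely convergent on $\mathbb H_{\rho_1}\times\mathbb H_{\rho_2}$ for some $\rho_1,\rho_2\in\mathbb R$. If $r>\max\{\rho_1,\rho_2\}$, then there exist positive constants $C_r,D_r$ such that for all $s,u\in\mathbb H_r$: $$|k^sl^uf(s,u)-a_{k,l}|\le C_r\Big(\frac{l^{\Re u}}{(l+1)^{\Re u-r}}+\frac{k^{\Re s}}{(k+1)^{\Re s-r}}+\frac{k^{\Re s}l^{\Re u}}{(k+1)^{\Re s-r}(l+1)^{\Re u-r}}\Big),$$ $$\Big|l^uf(s,u)-\sum_{m=k}^\infty a_{m,l}m^{-s}\Big|\le D_r\Big(\frac{l^{\Re u}}{(l+1)^{\Re u-r}}+\frac{k^{\Re s}l^{\Re u}}{(k+1)^{\Re s-r}(l+1)^{\Re u-r}}\Big).$$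
   Context: $\mathbb H_\rho=\{s\in\mathbb C:\Re s>\rho\}$. *)

theory Defs
  imports "HOL-Analysis.Analysis"
begin

definition ddterm :: "(nat \<Rightarrow> nat \<Rightarrow> complex) \<Rightarrow> complex \<Rightarrow> complex \<Rightarrow> nat \<times> nat \<Rightarrow> complex" where
  "ddterm a s u = (\<lambda>(m,n). a m n * of_nat m powr (-s) * of_nat n powr (-u))"

definition ddseries :: "(nat \<Rightarrow> nat \<Rightarrow> complex) \<Rightarrow> nat \<Rightarrow> nat \<Rightarrow> complex \<Rightarrow> complex \<Rightarrow> complex" where
  "ddseries a k l s u = infsum (ddterm a s u) ({k..} \<times> {l..})"

end

theory Submission
  imports Defs
begin


lemma bnd:
  fixes L y t r :: real
  assumes "0 < L" "L + 1 \<le> y" "r < t"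
  shows "y powr (-t) \<le> y powr (-r) / (L+1) powr (t-r)"
proof -
  have "y powr (-t) = y powr (-r) * y powr (r-t)" by (simp flip: powr_add)
  also have "y powr (r-t) \<le> (L+1) powr (r-t)"
    using assms by (intro powr_mono2') auto
  hence "y powr (-r) * y powr (r-t) \<le> y powr (-r) * (L+1) powr (r-t)"
    by (intro mult_left_mono) auto
  also have "(L+1) powr (r-t) = 1 / (L+1) powr (t-r)"
    by (metis minus_diff_eq powr_minus_divide)
  finally show ?thesis by simp
qed

lemma key1:
  fixes x y kk ll \<sigma> \<tau> r :: real
  assumes "1 \<le> kk" "1 \<le> ll" "x = kk \<or> kk+1 \<le> x" "y = ll \<or> ll+1 \<le> y" "\<not>(x=kk \<and> y=ll)" "r<\<sigma>" "r<\<tau>"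
  shows "kk powr \<sigma> * ll powr \<tau> * (x powr -\<sigma> * y powr -\<tau>) \<le>
     (kk powr r + ll powr r + kk powr -r + 1) *
     (ll powr \<tau> / (ll+1) powr (\<tau> - r) + kk powr \<sigma> / (kk+1) powr (\<sigma> - r)
      + kk powr \<sigma> * ll powr \<tau> / ((kk+1) powr (\<sigma> - r) * (ll+1) powr (\<tau> - r)))
     * (x powr -r * y powr -r)"
proof -
  define X1 where "X1 = ll powr \<tau> / (ll+1) powr (\<tau> - r)"
  define X2 where "X2 = kk powr \<sigma> / (kk+1) powr (\<sigma> - r)"
  define X3 where "X3 = kk powr \<sigma> * ll powr \<tau> / ((kk+1) powr (\<sigma> - r) * (ll+1) powr (\<tau> - r))"
  define K where "K = kk powr r + ll powr r + kk powr -r + 1"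
  have X: "X1 \<ge> 0" "X2 \<ge> 0" "X3 \<ge> 0" unfolding X1_def X2_def X3_def by auto
  have Kp: "kk powr r \<le> K" "ll powr r \<le> K" "1 \<le> K" unfolding K_def by auto
  have xp: "x > 0" "y > 0" using assms by auto
  have "kk powr \<sigma> * ll powr \<tau> * (x powr -\<sigma> * y powr -\<tau>) \<le> K * (X1+X2+X3) * (x powr -r * y powr -r)"
  proof (cases "x = kk")
    case True
    then have y: "ll+1 \<le> y" using assms by auto
    have e: "kk powr \<sigma> * kk powr -\<sigma> = 1" using assms by (simp flip: powr_add)
    have "kk powr \<sigma> * ll powr \<tau> * (x powr -\<sigma> * y powr -\<tau>) = ll powr \<tau> * y powr -\<tau>"
      using True e by (simp add: algebra_simps)
    also have "\<dots> \<le> ll powr \<tau> * (y powr (-r) / (ll+1) powr (\<tau>-r))"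
      using bnd[of ll y r \<tau>] y assms by (intro mult_left_mono) auto
    also have "\<dots> = kk powr r * X1 * (x powr -r * y powr -r)"
      using True assms unfolding X1_def by (simp add: powr_minus field_simps)
    also have "\<dots> \<le> K * (X1+X2+X3) * (x powr -r * y powr -r)"
      using Kp X by (intro mult_right_mono mult_mono) auto
    finally show ?thesis .
  next
    case False
    then have x: "kk+1 \<le> x" using assms by auto
    show ?thesis
    proof (cases "y = ll")
      case True
      have e: "ll powr \<tau> * ll powr -\<tau> = 1" using assms by (simp flip: powr_add)
      have "kk powr \<sigma> * ll powr \<tau> * (x powr -\<sigma> * y powr -\<tau>) = kk powr \<sigma> * x powr -\<sigma>"
        using True e by (simp add: algebra_simps)
      also have "\<dots> \<le> kk powr \<sigma> * (x powr (-r) / (kk+1) powr (\<sigma>-r))"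
        using bnd[of kk x r \<sigma>] x assms by (intro mult_left_mono) auto
      also have "\<dots> = ll powr r * X2 * (x powr -r * y powr -r)"
        using True assms unfolding X2_def by (simp add: powr_minus field_simps)
      also have "\<dots> \<le> K * (X1+X2+X3) * (x powr -r * y powr -r)"
        using Kp X by (intro mult_right_mono mult_mono) auto
      finally show ?thesis .
    next
      case False
      then have y: "ll+1 \<le> y" using assms by auto
      have "kk powr \<sigma> * ll powr \<tau> * (x powr -\<sigma> * y powr -\<tau>) \<le>
            kk powr \<sigma> * ll powr \<tau> * ((x powr (-r) / (kk+1) powr (\<sigma>-r)) * (y powr (-r) / (ll+1) powr (\<tau>-r)))"
        using bnd[of kk x r \<sigma>] bnd[of ll y r \<tau>] x y assms
        by (intro mult_left_mono mult_mono) auto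
      also have "\<dots> = X3 * (x powr -r * y powr -r)"
        unfolding X3_def by (simp add: field_simps)
      also have "\<dots> \<le> K * (X1+X2+X3) * (x powr -r * y powr -r)"
        using Kp X by (intro mult_right_mono) (auto intro: order.trans[of _ "X1+X2+X3"] simp: mult_le_cancel_right1)
      finally show ?thesis .
    qed
  qed
  then show ?thesis unfolding K_def X1_def X2_def X3_def .
qed

lemma key2:
  fixes x y kk ll \<sigma> \<tau> r :: real
  assumes "1 \<le> kk" "1 \<le> ll" "x = kk \<or> kk+1 \<le> x" "ll+1 \<le> y" "r<\<sigma>" "r<\<tau>"
  shows "ll powr \<tau> * (x powr -\<sigma> * y powr -\<tau>) \<le>
     (kk powr r + ll powr r + kk powr -r + 1) *
     (ll powr \<tau> / (ll+1) powr (\<tau> - r)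
      + kk powr \<sigma> * ll powr \<tau> / ((kk+1) powr (\<sigma> - r) * (ll+1) powr (\<tau> - r)))
     * (x powr -r * y powr -r)"
proof -
  define X1 where "X1 = ll powr \<tau> / (ll+1) powr (\<tau> - r)"
  define X3 where "X3 = kk powr \<sigma> * ll powr \<tau> / ((kk+1) powr (\<sigma> - r) * (ll+1) powr (\<tau> - r))"
  define K where "K = kk powr r + ll powr r + kk powr -r + 1"
  have X: "X1 \<ge> 0" "X3 \<ge> 0" unfolding X1_def X3_def by auto
  have Kp: "kk powr -r \<le> K" "1 \<le> K" unfolding K_def by auto
  have xp: "x > 0" "y > 0" using assms by auto
  have yb: "ll powr \<tau> * y powr -\<tau> \<le> X1 * y powr -r"
    using bnd[of ll y r \<tau>] assms unfolding X1_def by (auto simp: field_simps)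
  have "ll powr \<tau> * (x powr -\<sigma> * y powr -\<tau>) \<le> K * (X1+X3) * (x powr -r * y powr -r)"
  proof (cases "x = kk")
    case True
    have "x powr -\<sigma> \<le> x powr -r" using True assms by (intro powr_mono) auto
    then have "ll powr \<tau> * (x powr -\<sigma> * y powr -\<tau>) \<le> ll powr \<tau> * (x powr -r * y powr -\<tau>)"
      by (intro mult_left_mono mult_right_mono) auto
    also have "\<dots> = x powr -r * (ll powr \<tau> * y powr -\<tau>)" by simp
    also have "\<dots> \<le> x powr -r * (X1 * y powr -r)" using yb by (intro mult_left_mono) auto
    also have "\<dots> = X1 * (x powr -r * y powr -r)" by simp
    also have "\<dots> \<le> K * (X1+X3) * (x powr -r * y powr -r)"
      using Kp X by (intro mult_right_mono) (auto intro: order.trans[of _ "X1+X3"] simp: mult_le_cancel_right1)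
    finally show ?thesis .
  next
    case False
    then have x: "kk+1 \<le> x" using assms by auto
    have "ll powr \<tau> * (x powr -\<sigma> * y powr -\<tau>) = x powr -\<sigma> * (ll powr \<tau> * y powr -\<tau>)" by simp
    also have "\<dots> \<le> (x powr (-r) / (kk+1) powr (\<sigma>-r)) * (X1 * y powr -r)"
      using bnd[of kk x r \<sigma>] x assms yb by (intro mult_mono[OF _ yb]) auto
    also have "\<dots> = (kk powr -\<sigma>) * X3 * (x powr -r * y powr -r)"
    proof -
      have "kk powr -\<sigma> * kk powr \<sigma> = 1" using assms
        by (simp flip: powr_add)
      then show ?thesis unfolding X1_def X3_def using assms
        by (simp add: field_simps)
    qed
    also have "\<dots> \<le> K * (X1+X3) * (x powr -r * y powr -r)"
    proof -
      have "kk powr -\<sigma> \<le> kk powr -r" using assms by (intro powr_mono) auto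
      then have "kk powr -\<sigma> * X3 \<le> K * (X1 + X3)"
        using Kp X by (intro mult_mono) auto
      then show ?thesis by (intro mult_right_mono) auto
    qed
    finally show ?thesis .
  qed
  then show ?thesis unfolding K_def X1_def X3_def .
qed


lemma infsum_bound_aux:
  fixes g :: "'a \<Rightarrow> complex" and w :: "'a \<Rightarrow> real"
  assumes "g summable_on T" "w summable_on S" "T \<subseteq> S" "\<And>p. p \<in> S \<Longrightarrow> 0 \<le> w p"
    "\<And>p. p \<in> T \<Longrightarrow> norm (g p) \<le> c * w p" "0 \<le> c"
  shows "norm (infsum g T) \<le> c * infsum w S"
proof -
  have wT: "w summable_on T" using assms(2,3) by (rule summable_on_subset_banach)
  have "norm (infsum g T) \<le> infsum (\<lambda>p. c * w p) T"
    by (rule norm_infsum_le[OF has_sum_infsum[OF assms(1)] has_sum_infsum[OF summable_on_cmult_right[OF wT]]])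
      (use assms(5) in auto)
  also have "\<dots> = c * infsum w T" by (rule infsum_cmult_right) (use wT in auto)
  also have "infsum w T \<le> infsum w S"
    by (rule infsum_mono_neutral[OF wT assms(2)]) (use assms(3,4) in auto)
  hence "c * infsum w T \<le> c * infsum w S" using assms(6) by (rule mult_left_mono)
  finally show ?thesis .
qed

theorem lemma2p5:
  fixes a :: "nat \<Rightarrow> nat \<Rightarrow> complex" and k l :: nat and \<rho>1 \<rho>2 r :: real
  assumes "k > 0" and "l > 0"
    and abs_conv: "\<And>s u. Re s > \<rho>1 \<Longrightarrow> Re u > \<rho>2 \<Longrightarrow>
                     (\<lambda>p. norm (ddterm a s u p)) summable_on ({k..} \<times> {l..})"
    and "r > max \<rho>1 \<rho>2"
  shows "\<exists>C>0. \<exists>D>0. \<forall>s u. Re s > r \<and> Re u > r \<longrightarrow>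
     norm (of_nat k powr s * of_nat l powr u * ddseries a k l s u - a k l)
       \<le> C * (real l powr Re u / real (l+1) powr (Re u - r)
              + real k powr Re s / real (k+1) powr (Re s - r)
              + real k powr Re s * real l powr Re u
                / (real (k+1) powr (Re s - r) * real (l+1) powr (Re u - r)))
   \<and> norm (of_nat l powr u * ddseries a k l s u
            - (\<Sum>\<^sub>\<infinity>m\<in>{k..}. a m l * of_nat m powr (-s)))
       \<le> D * (real l powr Re u / real (l+1) powr (Re u - r)
              + real k powr Re s * real l powr Re u
                / (real (k+1) powr (Re s - r) * real (l+1) powr (Re u - r)))"
  
proof -
  define S where "S = {k..} \<times> {l..}"
  define w where "w p = norm (ddterm a (of_real r) (of_real r) p)" for p
  have wsum: "w summable_on S" unfolding w_def S_def using abs_conv[of "of_real r" "of_real r"] assms(4) by simp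
  have wnn: "\<And>p. 0 \<le> w p" unfolding w_def by simp
  define A where "A = infsum w S"
  have A0: "0 \<le> A" unfolding A_def by (rule infsum_nonneg) (use wnn in auto)
  have wmn: "w (m,n) = norm (a m n) * (real m powr -r * real n powr -r)" for m n
    unfolding w_def ddterm_def by (simp add: norm_mult norm_powr_real_powr)
  define K where "K = real k powr r + real l powr r + real k powr -r + 1"
  have K0: "0 < K" unfolding K_def by (smt (verit) powr_ge_zero)
  have k1: "1 \<le> real k" "1 \<le> real l" using assms(1,2) by auto
  show ?thesis
  proof (intro exI[of _ "K * (A+1)"] conjI allI impI)
    show "0 < K * (A+1)" using K0 A0 by simp
    show "0 < K * (A+1)" using K0 A0 by simp
    fix s u :: complex
    assume su: "r < Re s \<and> r < Re u"
    define X1 where "X1 = real l powr Re u / real (l+1) powr (Re u - r)"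
    define X2 where "X2 = real k powr Re s / real (k+1) powr (Re s - r)"
    define X3 where "X3 = real k powr Re s * real l powr Re u
                / (real (k+1) powr (Re s - r) * real (l+1) powr (Re u - r))"
    have X: "X1 \<ge> 0" "X2 \<ge> 0" "X3 \<ge> 0" unfolding X1_def X2_def X3_def by auto
    have dsum: "ddterm a s u summable_on S"
      unfolding S_def by (rule abs_summable_summable, rule abs_conv) (use su assms(4) in auto)
    have tmn: "norm (ddterm a s u (m,n)) = norm (a m n) * (real m powr -Re s * real n powr -Re u)" for m n
      unfolding ddterm_def by (simp add: norm_mult norm_powr_real_powr)
    have nk: "norm (of_nat k powr s :: complex) = real k powr Re s"
      and nl: "norm (of_nat l powr u :: complex) = real l powr Re u"
      by (simp_all add: norm_powr_real_powr)
    have ser: "ddseries a k l s u = infsum (ddterm a s u) S" unfolding ddseries_def S_def ..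
    have mcase: "real m = real k \<or> real k + 1 \<le> real m" if "m \<ge> k" for m
      using that by (cases "m = k") auto
    have ncase: "real n = real l \<or> real l + 1 \<le> real n" if "n \<ge> l" for n
      using that by (cases "n = l") auto
    define g1 where "g1 p = of_nat k powr s * of_nat l powr u * ddterm a s u p" for p
    define T1 where "T1 = S - {(k,l)}"
    have g1sum: "g1 summable_on S" unfolding g1_def by (rule summable_on_cmult_right[OF dsum])
    have g1T: "g1 summable_on T1" using g1sum unfolding T1_def by (rule summable_on_subset_banach) auto
    have "of_nat k powr s * of_nat l powr u * ddseries a k l s u = infsum g1 S"
      unfolding ser g1_def by (rule infsum_cmult_right[symmetric]) (use dsum in auto)
    also have "S = insert (k,l) T1" unfolding T1_def S_def by auto
    also have "infsum g1 (insert (k,l) T1) = g1 (k,l) + infsum g1 T1"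
      by (rule infsum_insert[OF g1T]) (auto simp: T1_def)
    also have "g1 (k,l) = a k l"
    proof -
      have "(of_nat k powr s :: complex) * of_nat k powr (-s) = 1"
        using assms(1) by (simp flip: powr_add)
      moreover have "(of_nat l powr u :: complex) * of_nat l powr (-u) = 1"
        using assms(2) by (simp flip: powr_add)
      ultimately show ?thesis unfolding g1_def ddterm_def
        by (simp add: algebra_simps)
    qed
    finally have eq1: "of_nat k powr s * of_nat l powr u * ddseries a k l s u - a k l = infsum g1 T1"
      by simp
    have "norm (infsum g1 T1) \<le> (K * (X1+X2+X3)) * infsum w S"
    proof (rule infsum_bound_aux[OF g1T wsum])
      show "T1 \<subseteq> S" unfolding T1_def by auto
      show "0 \<le> K * (X1+X2+X3)" using K0 X by simp
    next
      fix p assume "p \<in> S" then show "0 \<le> w p" using wnn by simp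
    next
      fix p assume p: "p \<in> T1"
      then obtain m n where pmn: "p = (m,n)" "m \<ge> k" "n \<ge> l" "(m,n) \<noteq> (k,l)"
        unfolding T1_def S_def by auto
      have ne: "\<not> (real m = real k \<and> real n = real l)" using pmn(4) by auto
      have "norm (g1 p) = norm (a m n) * (real k powr Re s * real l powr Re u *
              (real m powr -Re s * real n powr -Re u))"
        unfolding g1_def pmn(1) by (simp add: norm_mult nk nl tmn)
      also have "\<dots> \<le> norm (a m n) * (K * (X1+X2+X3) * (real m powr -r * real n powr -r))"
      proof (rule mult_left_mono)
        show "real k powr Re s * real l powr Re u * (real m powr -Re s * real n powr -Re u)
           \<le> K * (X1+X2+X3) * (real m powr -r * real n powr -r)"
          using key1[OF k1 mcase[OF pmn(2)] ncase[OF pmn(3)] ne, where \<sigma>="Re s" and \<tau>="Re u" and r=r] su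
          unfolding K_def X1_def X2_def X3_def by (simp add: add.commute)
      qed simp
      also have "\<dots> = K * (X1+X2+X3) * w p" unfolding pmn(1) wmn by simp
      finally show "norm (g1 p) \<le> K * (X1+X2+X3) * w p" .
    qed
    also have "(K * (X1+X2+X3)) * infsum w S \<le> K * (A+1) * (X1+X2+X3)"
      using K0 X unfolding A_def[symmetric] by (simp add: mult_left_mono mult_right_mono algebra_simps)
    finally show "norm (of_nat k powr s * of_nat l powr u * ddseries a k l s u - a k l)
       \<le> K * (A+1) * (real l powr Re u / real (l+1) powr (Re u - r)
              + real k powr Re s / real (k+1) powr (Re s - r)
              + real k powr Re s * real l powr Re u
                / (real (k+1) powr (Re s - r) * real (l+1) powr (Re u - r)))"
      unfolding eq1 X1_def X2_def X3_def .
    define g2 where "g2 p = of_nat l powr u * ddterm a s u p" for p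
    define S0 where "S0 = {k..} \<times> {l}"
    define S1 where "S1 = {k..} \<times> {l<..}"
    have SU: "S = S0 \<union> S1" unfolding S_def S0_def S1_def by auto
    have g2sum: "g2 summable_on S" unfolding g2_def by (rule summable_on_cmult_right[OF dsum])
    have g2S0: "g2 summable_on S0" using g2sum by (rule summable_on_subset_banach) (auto simp: SU)
    have g2S1: "g2 summable_on S1" using g2sum by (rule summable_on_subset_banach) (auto simp: SU)
    have "of_nat l powr u * ddseries a k l s u = infsum g2 S"
      unfolding ser g2_def by (rule infsum_cmult_right[symmetric]) (use dsum in auto)
    also have "\<dots> = infsum g2 S0 + infsum g2 S1"
      unfolding SU by (rule infsum_Un_disjoint[OF g2S0 g2S1]) (auto simp: S0_def S1_def)
    also have "infsum g2 S0 = (\<Sum>\<^sub>\<infinity>m\<in>{k..}. a m l * of_nat m powr (-s))"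
    proof -
      have "S0 = (\<lambda>m. (m,l)) ` {k..}" unfolding S0_def by auto
      hence "infsum g2 S0 = infsum (g2 \<circ> (\<lambda>m. (m,l))) {k..}"
        by (simp add: infsum_reindex inj_on_def)
      also have "\<dots> = (\<Sum>\<^sub>\<infinity>m\<in>{k..}. a m l * of_nat m powr (-s))"
      proof (rule infsum_cong)
        fix m
        have "(of_nat l powr u :: complex) * of_nat l powr (-u) = 1"
          using assms(2) by (simp flip: powr_add)
        then show "(g2 \<circ> (\<lambda>m. (m,l))) m = a m l * of_nat m powr (-s)"
          unfolding g2_def ddterm_def o_def
          by (simp add: algebra_simps)
      qed
      finally show ?thesis .
    qed
    finally have eq2: "of_nat l powr u * ddseries a k l s u
            - (\<Sum>\<^sub>\<infinity>m\<in>{k..}. a m l * of_nat m powr (-s)) = infsum g2 S1"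
      by simp
    have "norm (infsum g2 S1) \<le> (K * (X1+X3)) * infsum w S"
    proof (rule infsum_bound_aux[OF g2S1 wsum])
      show "S1 \<subseteq> S" unfolding SU by auto
      show "0 \<le> K * (X1+X3)" using K0 X by simp
    next
      fix p assume "p \<in> S" then show "0 \<le> w p" using wnn by simp
    next
      fix p assume p: "p \<in> S1"
      then obtain m n where pmn: "p = (m,n)" "m \<ge> k" "n > l"
        unfolding S1_def by auto
      have nl1: "real l + 1 \<le> real n" using pmn(3) by simp
      have "norm (g2 p) = norm (a m n) * (real l powr Re u *
              (real m powr -Re s * real n powr -Re u))"
        unfolding g2_def pmn(1) by (simp add: norm_mult nl tmn)
      also have "\<dots> \<le> norm (a m n) * (K * (X1+X3) * (real m powr -r * real n powr -r))"
      proof (rule mult_left_mono)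
        show "real l powr Re u * (real m powr -Re s * real n powr -Re u)
           \<le> K * (X1+X3) * (real m powr -r * real n powr -r)"
          using key2[OF k1 mcase[OF pmn(2)] nl1, where \<sigma>="Re s" and \<tau>="Re u" and r=r] su
          unfolding K_def X1_def X3_def by (simp add: add.commute)
      qed simp
      also have "\<dots> = K * (X1+X3) * w p" unfolding pmn(1) wmn by simp
      finally show "norm (g2 p) \<le> K * (X1+X3) * w p" .
    qed
    also have "(K * (X1+X3)) * infsum w S \<le> K * (A+1) * (X1+X3)"
      using K0 X unfolding A_def[symmetric] by (simp add: mult_left_mono mult_right_mono algebra_simps)
    finally show "norm (of_nat l powr u * ddseries a k l s u
            - (\<Sum>\<^sub>\<infinity>m\<in>{k..}. a m l * of_nat m powr (-s)))
       \<le> K * (A+1) * (real l powr Re u / real (l+1) powr (Re u - r)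
              + real k powr Re s * real l powr Re u
                / (real (k+1) powr (Re s - r) * real (l+1) powr (Re u - r)))"
      unfolding eq2 X1_def X3_def .
  qed
qed

end
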